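(* Let $\mathcal{A},\mathcal{B},\mathcal{D},\mathcal{H},\tau,\mathcal{V}>0$ with $\mathcal{A}>2\mathcal{B}(\mathcal{H}+\sqrt{1+\mathcal{H}^2})$, and let $\mathbf{W}^\ast=(U^\ast,V^\ast,S^\ast,0)$ be any spatially homogeneous steady state of (S) with $V^\ast>0$ and $\mathcal{H}V^\ast<1$ (in particular the state $\mathbf{W}_R^\ast$ with $V^\ast=V_R=\frac{\mathcal{A}+\sqrt{\mathcal{A}^2-4\mathcal{B}(\mathcal{B}+\mathcal{A}\mathcal{H})}}{2(\mathcal{B}+\mathcal{A}\mathcal{H})}$ when $\mathcal{H}V_R<1$). Then for no real wavenumber $k\neq0$ does the dispersion relation $\det(\omega I+\mathrm{i}kM-\mathcal{L}^\ast)=0$ admit the root $\omega=0$. In other words, (S) admits no Turing (stationary) instability at such a steady state.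
   Context: The dimensionless model (S): $U_t-\mathcal{V}U_x=\mathcal{A}-U-UV^2$, $V_t+J_x=UV^2-\mathcal{B}V-\mathcal{H}SV$, $\mathcal{D}S_t=\mathcal{B}V+\mathcal{H}SV-S$, $\tau J_t+V_x=-J$. Written as $\mathbf{W}_t+M\mathbf{W}_x=\mathbf{N}(\mathbf{W})$ with $\mathbf{W}=(U,V,S,J)^T$, $\mathbf{N}=(\mathcal{A}-U-UV^2,\ UV^2-\mathcal{B}V-\mathcal{H}SV,\ (\mathcal{B}V+\mathcal{H}SV-S)/\mathcal{D},\ -J/\tau)^T$ and $M$ the $4\times4$ matrix with entries $M_{11}=-\mathcal{V}$, $M_{24}=1$, $M_{42}=1/\tau$ and all other entries zero. $\mathcal{L}^\ast$ is the Jacobian of $\mathbf{N}$ at $\mathbf{W}^\ast$, and $I$ the $4\times4$ identity. Homogeneous steady states with $V^\ast>0$ satisfy $U^\ast=\mathcal{B}/(V^\ast(1-\mathcal{H}V^\ast))$, $S^\ast=\mathcal{B}V^\ast/(1-\mathcal{H}V^\ast)$. *)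

theory Defs
  imports "HOL-Analysis.Analysis"
begin

text \<open>State vector W = (U, V, S, J), components indexed 1..4 (in type 4, index 4 is the element 0).\<close>

definition Nfield :: "real \<Rightarrow> real \<Rightarrow> real \<Rightarrow> real \<Rightarrow> real \<Rightarrow> real^4 \<Rightarrow> real^4" where
  "Nfield A B D H \<tau> w =
     vector [A - w$1 - w$1 * (w$2)^2,
             w$1 * (w$2)^2 - B * w$2 - H * w$3 * w$2,
             (B * w$2 + H * w$3 * w$2 - w$3) / D,
             - w$4 / \<tau>]"

definition Mmat :: "real \<Rightarrow> real \<Rightarrow> real^4^4" where
  "Mmat Vc \<tau> = (\<chi> i j. if i = 1 \<and> j = 1 then - Vc
                        else if i = 2 \<and> j = 4 then 1
                        else if i = 4 \<and> j = 2 then 1 / \<tau>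
                        else 0)"

definition cmat :: "real^'n^'m \<Rightarrow> complex^'n^'m" where
  "cmat X = (\<chi> i j. complex_of_real (X $ i $ j))"

end

theory Submission imports Defs begin
lemma vector_4 [simp]:
  "(vector [a,b,c,d] :: 'a::zero^4) $ 1 = a"
  "(vector [a,b,c,d] :: 'a::zero^4) $ 2 = b"
  "(vector [a,b,c,d] :: 'a::zero^4) $ 3 = c"
  "(vector [a,b,c,d] :: 'a::zero^4) $ 4 = d"
  by (simp_all add: vector_def)

definition Lw :: "real \<Rightarrow> real \<Rightarrow> real \<Rightarrow> real \<Rightarrow> real^4 \<Rightarrow> real^4 \<Rightarrow> real^4" where
 "Lw B D H \<tau> w h = vector [- h$1 - (h$1 * (w$2)^2 + w$1 * (2 * w$2 * h$2)),
     h$1 * (w$2)^2 + w$1 * (2 * w$2 * h$2) - B * h$2 - H * (h$3 * w$2 + w$3 * h$2),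
     (B * h$2 + H * (h$3 * w$2 + w$3 * h$2) - h$3) / D,
     - h$4 / \<tau>]"

lemma vec4_has_derivative:
  fixes f :: "real^'n \<Rightarrow> real^4"
  assumes "\<And>i. ((\<lambda>x. f x $ i) has_derivative (\<lambda>h. f' h $ i)) (at a)"
  shows "(f has_derivative f') (at a)"
proof -
  have "\<forall>i\<in>Basis. ((\<lambda>x. f x \<bullet> i) has_derivative (\<lambda>x. f' x \<bullet> i)) (at a within UNIV)"
  proof
    fix i :: "real^4" assume "i \<in> Basis"
    then obtain j where "i = axis j 1" by (auto simp: Basis_vec_def)
    then show "((\<lambda>x. f x \<bullet> i) has_derivative (\<lambda>x. f' x \<bullet> i)) (at a within UNIV)"
      using assms[of j] by (simp add: inner_axis)
  qed
  then show ?thesis using has_derivative_componentwise_within[of f f' a UNIV] by simp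
qed
lemma vec_nth_has_derivative[derivative_intros]:
  "((\<lambda>x::real^'n. x $ j) has_derivative (\<lambda>h. h $ j)) F"
  by (rule bounded_linear.has_derivative[OF bounded_linear_vec_nth has_derivative_ident])

lemma Nfield_deriv: "(Nfield A B D H \<tau> has_derivative Lw B D H \<tau> w) (at w)"
proof (rule vec4_has_derivative)
  fix i :: 4
  from exhaust_4[of i] show "((\<lambda>x. Nfield A B D H \<tau> x $ i) has_derivative (\<lambda>h. Lw B D H \<tau> w h $ i)) (at w)"
    apply (elim disjE; hypsubst)
    apply (simp_all only: Nfield_def Lw_def vector_4 divide_inverse)
    apply (auto intro!: derivative_eq_intros ext simp: algebra_simps power2_eq_square)
    done
qed
lemma alg:
  fixes x1 x2 x3 x4 :: complex and q V H k Vc :: real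
  assumes q: "q > 0" and V: "V > 0" and HV: "H * V < 1" and k: "k \<noteq> 0" and Vc: "Vc > 0"
    and e1: "(1 + V^2 - \<i> * k * Vc) * x1 + 2 * q * x2 = 0"
    and e2: "- (V^2) * x1 - q * x2 + H * V * x3 + \<i> * k * x4 = 0"
    and e3: "- q * x2 + (1 - H * V) * x3 = 0"
    and e4: "\<i> * k * x2 + x4 = 0"
  shows "x1 = 0 \<and> x2 = 0 \<and> x3 = 0 \<and> x4 = 0"
proof -
  define c where "c = 1 + V^2 - \<i> * k * Vc"
  have c0: "c \<noteq> 0"
  proof
    assume "c = 0" then have "Re c = 0" by simp
    moreover have "Re c = 1 + V^2" by (simp add: c_def)
    ultimately show False by (smt (verit) zero_le_power2)
  qed
  have hvr: "complex_of_real (1 - H * V) \<noteq> 0" using HV by (simp only: of_real_eq_0_iff)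
  then have hv0: "1 - complex_of_real H * complex_of_real V \<noteq> 0" by simp
  have cx1: "c * x1 = - (2 * q * x2)" using e1 unfolding c_def[symmetric]
    by (simp add: eq_neg_iff_add_eq_0)
  have x3: "(1 - H * V) * x3 = q * x2" using e3 by (simp add: algebra_simps)
  have x4: "x4 = - (\<i> * k * x2)" using e4 by (simp add: eq_neg_iff_add_eq_0 add.commute)
  define R where "R = q * (2 * H * V - 1) + k^2 * (1 - H * V)"
  define P where "P = 2 * q * V^2 * (1 - H * V) + c * R"
  have "x2 * P = 0"
  proof -
    have "0 = (1 - H * V) * c * (- (V^2) * x1 - q * x2 + H * V * x3 + \<i> * k * x4)"
      using e2 by simp
    also have "\<dots> = - (V^2) * (1 - H * V) * (c * x1) - q * (1 - H * V) * c * x2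
        + H * V * c * ((1 - H * V) * x3) + \<i> * k * (1 - H * V) * c * x4"
      by (simp add: algebra_simps)
    also have "\<dots> = - (V^2) * (1 - H * V) * (- (2 * q * x2)) - q * (1 - H * V) * c * x2
        + H * V * c * (q * x2) + \<i> * k * (1 - H * V) * c * (- (\<i> * k * x2))"
      by (simp only: cx1 x3 x4)
    also have "\<dots> = x2 * P"
      by (simp add: P_def R_def algebra_simps power2_eq_square)
    finally show ?thesis by simp
  qed
  moreover have "P \<noteq> 0"
  proof
    assume P0: "P = 0"
    have "Im P = - k * Vc * R" by (simp add: P_def c_def)
    with P0 k Vc have "R = 0" by simp
    moreover have "Re P = 2 * q * V^2 * (1 - H * V) + (1 + V^2) * R" by (simp add: P_def c_def)
    ultimately have "2 * q * V^2 * (1 - H * V) = 0" using P0 by simp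
    moreover have "2 * q * V^2 * (1 - H * V) > 0" using q V HV by simp
    ultimately show False by linarith
  qed
  ultimately have x20: "x2 = 0" by simp
  then show ?thesis using cx1 x3 x4 c0 hv0 by simp
qed
lemma mat_entry: "(mat c :: 'a::zero^'n^'n) $ i $ j = (if i = j then c else 0)"
  by (simp add: mat_def)
lemma divhelp: "(d::complex) \<noteq> 0 \<Longrightarrow> - (a / d) = b / d \<Longrightarrow> - a = b"
  by (metis divide_cancel_right minus_divide_left)
lemma divhelp2: "(d::complex) \<noteq> 0 \<Longrightarrow> a / d + b / d = 0 \<Longrightarrow> a + b = 0"
  by (metis add_divide_distrib divide_eq_0_iff)
lemma sum_4: "sum f (UNIV::4 set) = f 1 + f 2 + f 3 + f 4"
  unfolding UNIV_4 by (simp add: add.assoc)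
lemma mat_mult_entry: "(mat c ** X) $ i $ j = c * X $ i $ j"
proof -
  have e: "(\<lambda>k. (if i = k then c else 0) * X$k$j) = (\<lambda>k. if k = i then c * X$k$j else 0)"
    by auto
  show ?thesis unfolding matrix_matrix_mult_def mat_def vec_lambda_beta e by simp
qed
theorem mainTheorem7:
  fixes A B D H \<tau> Vc U V S :: real
  assumes "A > 0" and "B > 0" and "D > 0" and "H > 0" and "\<tau> > 0" and "Vc > 0"
    and "A > 2 * B * (H + sqrt (1 + H^2))"
    and "Nfield A B D H \<tau> (vector [U, V, S, 0]) = 0"
    and "V > 0" and "H * V < 1"
  shows "\<forall>k::real. k \<noteq> 0 \<longrightarrow>
           det (mat (0::complex) + mat (\<i> * complex_of_real k) ** cmat (Mmat Vc \<tau>)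
                - cmat (jacobian (Nfield A B D H \<tau>) (at (vector [U, V, S, 0])))) \<noteq> 0"
proof (intro allI impI)
  fix k :: real assume k: "k \<noteq> 0"
  define w :: "real^4" where "w = vector [U, V, S, 0]"
  have J: "jacobian (Nfield A B D H \<tau>) (at w) = matrix (Lw B D H \<tau> w)"
    unfolding jacobian_def using frechet_derivative_at[OF Nfield_deriv] by metis
  have N: "Nfield A B D H \<tau> w $ i = 0" for i using assms(8) unfolding w_def by simp
  have s1: "A - U - U * V^2 = 0" using N[of 1] by (simp add: Nfield_def w_def)
  have s2: "U * V^2 - B * V - H * S * V = 0" using N[of 2] by (simp add: Nfield_def w_def)
  have s3: "B * V + H * S * V - S = 0" using N[of 3] assms(3) by (simp add: Nfield_def w_def)
  define K where "K = mat (0::complex) + mat (\<i> * complex_of_real k) ** cmat (Mmat Vc \<tau>)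
                - cmat (matrix (Lw B D H \<tau> w))"
  show "det (mat (0::complex) + mat (\<i> * complex_of_real k) ** cmat (Mmat Vc \<tau>)
                - cmat (jacobian (Nfield A B D H \<tau>) (at (vector [U, V, S, 0])))) \<noteq> 0"
  proof
    assume "det (mat (0::complex) + mat (\<i> * complex_of_real k) ** cmat (Mmat Vc \<tau>)
                - cmat (jacobian (Nfield A B D H \<tau>) (at (vector [U, V, S, 0])))) = 0"
    then have "det K = 0" unfolding K_def J[unfolded w_def] w_def .
    then have "\<not> (\<forall>x. K *v x = 0 \<longrightarrow> x = 0)"
      using invertible_det_nz[of K] invertible_left_inverse[of K] matrix_left_invertible_ker[of K] by blast
    then obtain x where Kx: "K *v x = 0" and x0: "x \<noteq> 0" by blast
    have qeq: "B = U * V - H * S"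
    proof -
      have "V * (U * V - B - H * S) = 0" using s2 by (simp add: algebra_simps power2_eq_square)
      then show ?thesis using assms(9) by simp
    qed
    have qeqC: "complex_of_real B = of_real U * of_real V - of_real H * of_real S"
      using qeq by simp
    have Upos: "U > 0"
    proof -
      have "U * (1 + V^2) = A" using s1 by (simp add: algebra_simps)
      then show ?thesis using assms(1) by (smt (verit) mult_nonpos_nonneg zero_le_power2)
    qed
    have D0: "complex_of_real D \<noteq> 0" using assms(3) by simp
    have t0: "complex_of_real \<tau> \<noteq> 0" using assms(5) by simp
    have r1: "(1 + V^2 - \<i> * k * Vc) * x$1 + 2 * (U * V) * x$2 = 0"
      using arg_cong[OF Kx, of "\<lambda>v. v $ 1"]
      by (simp add: K_def matrix_vector_mult_def sum_4 mat_mult_entry cmat_def Mmat_def matrix_def Lw_def axis_def w_def mat_entry)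
         (simp add: algebra_simps)
    have r2: "- (V^2) * x$1 - (U * V) * x$2 + H * V * x$3 + \<i> * k * x$4 = 0"
      using arg_cong[OF Kx, of "\<lambda>v. v $ 2"]
      by (simp add: K_def matrix_vector_mult_def sum_4 mat_mult_entry cmat_def Mmat_def matrix_def Lw_def axis_def w_def mat_entry)
         (simp add: algebra_simps qeqC)
    have r3: "- (U * V) * x$2 + (1 - H * V) * x$3 = 0"
      using arg_cong[OF Kx, of "\<lambda>v. v $ 3"]
      by (simp add: K_def matrix_vector_mult_def sum_4 mat_mult_entry cmat_def Mmat_def matrix_def Lw_def axis_def w_def mat_entry)
         (auto dest!: divhelp[OF D0] simp: algebra_simps qeqC)
    have r4: "\<i> * k * x$2 + x$4 = 0"
      using arg_cong[OF Kx, of "\<lambda>v. v $ 4"]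
      by (simp add: K_def matrix_vector_mult_def sum_4 mat_mult_entry cmat_def Mmat_def matrix_def Lw_def axis_def w_def mat_entry)
         (auto dest!: divhelp2[OF t0] simp: algebra_simps)
    have "x$1 = 0 \<and> x$2 = 0 \<and> x$3 = 0 \<and> x$4 = 0"
      by (rule alg[OF _ assms(9) assms(10) k assms(6) r1 r2 r3 r4]) (use Upos assms(9) in simp)
    then show False using x0 by (simp add: vec_eq_iff forall_4)
  qed
qed
end
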